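(* Let $m,K$ be positive integers and $b_1,\dots,b_{3m}$ positive integers with $K/4<b_i<K/2$ and $\sum_i b_i=mK$. Set $W=100(5m)^2K$, $a_i=b_i+W$, $L=3W+K$, $\epsilon=1/(400(5m)^2)$, $h=\lfloor 4\epsilon L\rfloor$, $H=L+h$, $\beta_0=h/H$, $\beta_i=a_i/H-1/3$ ($1\le i\le 3m$). Let $X$ be the multiset consisting of $a_1,\dots,a_{3m}$, $m$ copies of $-H$ and $m$ copies of $h$, and let $T_{\min}$ be a minimum-cost addition tree over $X$. If a node $z$ of $T_{\min}$ has value of the form $(1/3+\lambda)H$, then $z$ is a leaf.
   Context: An addition tree over a multiset $X$ is a full binary tree whose leaves are labeled by the elements of $X$ (each used once), each internal node having value equal to the sum of its children's values; its cost is the sum of the absolute values of its internal nodes, and $T_{\min}$ minimizes the cost. A "$\lambda$" denotes a sum of at most $5m$ numbers each of the form $\pm\beta_i$ with $0\le i\le 3m$. Every node value can be written as $(N/3+\lambda)H$ with $N$ an integer; since $|\lambda|\le 1/(500m)$, $N$ and the value of $\lambda$ are uniquely determined. *)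

theory Defs
  imports Complex_Main "HOL-Library.Multiset"
begin

datatype atree = Leaf int | Node atree atree

fun aval :: "atree \<Rightarrow> int" where
  "aval (Leaf x) = x"
| "aval (Node l r) = aval l + aval r"

fun leaves :: "atree \<Rightarrow> int multiset" where
  "leaves (Leaf x) = {#x#}"
| "leaves (Node l r) = leaves l + leaves r"

fun cost :: "atree \<Rightarrow> int" where
  "cost (Leaf x) = 0"
| "cost (Node l r) = \<bar>aval l + aval r\<bar> + cost l + cost r"

text \<open>Nodes of a tree, each represented by the subtree rooted at it.\<close>
fun nodes :: "atree \<Rightarrow> atree set" where
  "nodes (Leaf x) = {Leaf x}"
| "nodes (Node l r) = insert (Node l r) (nodes l \<union> nodes r)"

definition is_leaf :: "atree \<Rightarrow> bool" where
  "is_leaf t \<longleftrightarrow> (\<exists>x. t = Leaf x)"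

definition addition_tree_over :: "int multiset \<Rightarrow> atree \<Rightarrow> bool" where
  "addition_tree_over X T \<longleftrightarrow> leaves T = X"

definition min_cost_tree :: "int multiset \<Rightarrow> atree \<Rightarrow> bool" where
  "min_cost_tree X T \<longleftrightarrow> addition_tree_over X T \<and>
     (\<forall>T'. addition_tree_over X T' \<longrightarrow> cost T \<le> cost T')"

text \<open>A "lambda": a sum of at most N numbers each of the form \<open>\<pm>\<beta>_i\<close> with \<open>0 \<le> i \<le> n\<close>.\<close>
definition is_lambda :: "nat \<Rightarrow> nat \<Rightarrow> (nat \<Rightarrow> real) \<Rightarrow> real \<Rightarrow> bool" where
  "is_lambda N n \<beta> l \<longleftrightarrow> (\<exists>cs :: (bool \<times> nat) list.
      length cs \<le> N \<and> (\<forall>c\<in>set cs. snd c \<le> n) \<and>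
      l = (\<Sum>c\<leftarrow>cs. (if fst c then 1 else -1) * \<beta> (snd c)))"

end

theory Submission
  imports Defs
begin


definition ee :: "int \<Rightarrow> int" where
  "ee n = (if n = 1 then 1 else if n = -1 \<or> n = -2 then -1 else 0)"

lemma ee_ineq: "ee x + ee y - ee (x+y) + (if x + y = 1 then 1 else 0) \<le> \<bar>x+y\<bar>"
  unfolding ee_def by (auto split: if_splits)

fun NN :: "(int \<Rightarrow> int) \<Rightarrow> atree \<Rightarrow> int" where
  "NN c (Leaf x) = c x" | "NN c (Node l r) = NN c l + NN c r"
fun DD :: "(int \<Rightarrow> int) \<Rightarrow> atree \<Rightarrow> int" where
  "DD c (Leaf x) = 0" | "DD c (Node l r) = \<bar>NN c l + NN c r\<bar> + DD c l + DD c r"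
fun PP :: "(int \<Rightarrow> int) \<Rightarrow> atree \<Rightarrow> int" where
  "PP c (Leaf x) = (if c x = 1 then 1 else 0)" | "PP c (Node l r) = PP c l + PP c r"
definition has1 :: "(int \<Rightarrow> int) \<Rightarrow> atree \<Rightarrow> bool" where
  "has1 c t = (\<exists>u\<in>nodes t. \<not> is_leaf u \<and> NN c u = 1)"

lemma DD_lower: "\<forall>x\<in>#leaves t. c x \<in> {1,0,-3} \<Longrightarrow>
  DD c t \<ge> PP c t - ee (NN c t) + (if has1 c t then 1 else 0)"
proof (induction t)
  case (Leaf x) thus ?case by (auto simp: has1_def is_leaf_def ee_def)
next
  case (Node l r)
  have h1: "has1 c (Node l r) \<longleftrightarrow> NN c (Node l r) = 1 \<or> has1 c l \<or> has1 c r"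
    by (auto simp: has1_def is_leaf_def)
  have il: "DD c l \<ge> PP c l - ee (NN c l) + (if has1 c l then 1 else 0)" using Node by auto
  have ir: "DD c r \<ge> PP c r - ee (NN c r) + (if has1 c r then 1 else 0)" using Node by auto
  have e: "ee (NN c l) + ee (NN c r) - ee (NN c l + NN c r) + (if NN c l + NN c r = 1 then 1 else 0)
     \<le> \<bar>NN c l + NN c r\<bar>" by (rule ee_ineq)
  show ?case using il ir h1 e by (auto split: if_splits)
qed

lemma aval_bound: "\<forall>x\<in>#leaves t. \<bar>3*x - c x * H\<bar> \<le> B \<Longrightarrow>
   \<bar>3 * aval t - NN c t * H\<bar> \<le> B * int (size (leaves t))"
proof (induction t)
  case (Leaf x) thus ?case by auto
next
  case (Node l r)
  have il: "\<bar>3 * aval l - NN c l * H\<bar> \<le> B * int (size (leaves l))" using Node by auto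
  have ir: "\<bar>3 * aval r - NN c r * H\<bar> \<le> B * int (size (leaves r))" using Node by auto
  have "3 * aval (Node l r) - NN c (Node l r) * H = (3 * aval l - NN c l * H) + (3 * aval r - NN c r * H)"
    by (simp add: algebra_simps)
  then have "\<bar>3 * aval (Node l r) - NN c (Node l r) * H\<bar> \<le> \<bar>3 * aval l - NN c l * H\<bar> + \<bar>3 * aval r - NN c r * H\<bar>"
    by simp
  also have "\<dots> \<le> B * int (size (leaves (Node l r)))" using il ir by (simp add: algebra_simps)
  finally show ?case .
qed

lemma cost_lower: "\<forall>x\<in>#leaves t. \<bar>3*x - c x * H\<bar> \<le> B \<Longrightarrow> int (size (leaves t)) \<le> S \<Longrightarrow> H \<ge> 0 \<Longrightarrow> B \<ge> 0 \<Longrightarrow>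
   3 * cost t \<ge> H * DD c t - B * S * (int (size (leaves t)) - 1)"
proof (induction t)
  case (Leaf x) thus ?case by auto
next
  case (Node l r)
  let ?sl = "int (size (leaves l))" and ?sr = "int (size (leaves r))"
  have il: "3 * cost l \<ge> H * DD c l - B * S * (?sl - 1)" using Node by auto
  have ir: "3 * cost r \<ge> H * DD c r - B * S * (?sr - 1)" using Node by auto
  have ab: "\<bar>3 * aval (Node l r) - NN c (Node l r) * H\<bar> \<le> B * int (size (leaves (Node l r)))"
    by (rule aval_bound) (use Node in auto)
  also have "\<dots> \<le> B * S" using Node by (intro mult_left_mono) auto
  finally have ab2: "\<bar>3 * aval (Node l r) - NN c (Node l r) * H\<bar> \<le> B * S" .
  have "H * \<bar>NN c (Node l r)\<bar> = \<bar>NN c (Node l r) * H\<bar>" using Node by (simp add: abs_mult)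
  also have "\<dots> \<le> \<bar>3 * aval (Node l r)\<bar> + \<bar>3 * aval (Node l r) - NN c (Node l r) * H\<bar>" by linarith
  finally have nd0: "H * \<bar>NN c (Node l r)\<bar> \<le> \<bar>3 * aval (Node l r)\<bar> + \<bar>3 * aval (Node l r) - NN c (Node l r) * H\<bar>" .
  have "\<bar>3 * aval (Node l r)\<bar> = 3 * \<bar>aval l + aval r\<bar>" using abs_mult[of 3 "aval l + aval r"] by (simp add: distrib_left)
  then have nd: "3 * \<bar>aval l + aval r\<bar> \<ge> H * \<bar>NN c l + NN c r\<bar> - B * S" using ab2 nd0 by simp
  have "B * S * (?sl + ?sr - 1) = B * S * (?sl - 1) + B * S * (?sr - 1) + B * S"
    by (simp add: algebra_simps)
  then show ?case using il ir nd by (simp add: algebra_simps)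
qed

lemma leaves_sub: "u \<in> nodes t \<Longrightarrow> leaves u \<subseteq># leaves t"
proof (induction t)
  case (Leaf x) thus ?case by auto
next
  case (Node l r)
  then show ?case
    by (auto intro: subset_mset.order_trans[OF _ mset_subset_eq_add_left]
                    subset_mset.order_trans[OF _ mset_subset_eq_add_right])
qed

lemma abs_sum_list_le: "(\<forall>c\<in>set cs. \<bar>f c\<bar> \<le> (B::real)) \<Longrightarrow> \<bar>\<Sum>c\<leftarrow>cs. f c\<bar> \<le> real (length cs) * B"
proof (induction cs)
  case Nil thus ?case by simp
next
  case (Cons x xs)
  then have "\<bar>\<Sum>c\<leftarrow>xs. f c\<bar> \<le> real (length xs) * B" "\<bar>f x\<bar> \<le> B" by auto
  then show ?case by (simp add: algebra_simps)
qed



definition grp :: "(nat \<Rightarrow> int) \<Rightarrow> int \<Rightarrow> int \<Rightarrow> nat \<Rightarrow> atree" where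
  "grp a H h t = Node (Node (Node (Node (Leaf (-H)) (Leaf (a (3*t+1)))) (Leaf (a (3*t+2)))) (Leaf (a (3*t+3)))) (Leaf h)"

fun build :: "(nat \<Rightarrow> int) \<Rightarrow> int \<Rightarrow> int \<Rightarrow> nat \<Rightarrow> atree" where
  "build a H h 0 = grp a H h 0"
| "build a H h (Suc k) = Node (build a H h k) (grp a H h (Suc k))"

lemma leaves_build: "leaves (build a H h k) =
   mset (map a [1..<3*k+4]) + replicate_mset (k+1) (-H) + replicate_mset (k+1) h"
proof (induction k)
  case 0 thus ?case by (simp add: grp_def numeral_eq_Suc upt_rec)
next
  case (Suc k)
  have "[1..<3*Suc k+4] = [1..<3*k+4] @ [3*k+4, 3*k+5, 3*k+6]"
    by (simp add: upt_Suc_append[symmetric] numeral_eq_Suc)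
  then show ?case using Suc by (simp add: grp_def add_ac numeral_eq_Suc)
qed

lemma grp_bounds:
  assumes "\<And>i. i \<in> {3*t+1, 3*t+2, 3*t+3} \<Longrightarrow> 0 < b i \<and> 2 * b i < K \<and> a i = b i + W"
    and "H = 3*W + K + h" and "W \<ge> 0" and "h \<ge> 0" and "K \<ge> 0"
  shows "\<bar>aval (grp a H h t)\<bar> \<le> K" "cost (grp a H h t) \<le> H + 3*K + 2*h"
proof -
  have b1: "0 < b (3*t+1) \<and> 2 * b (3*t+1) < K \<and> a (3*t+1) = b (3*t+1) + W" using assms(1) by blast
  have b2: "0 < b (3*t+2) \<and> 2 * b (3*t+2) < K \<and> a (3*t+2) = b (3*t+2) + W" using assms(1) by blast
  have b3: "0 < b (3*t+3) \<and> 2 * b (3*t+3) < K \<and> a (3*t+3) = b (3*t+3) + W" using assms(1) by blast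
  show "\<bar>aval (grp a H h t)\<bar> \<le> K" using b1 b2 b3 assms(2-) by (simp add: grp_def) linarith
  show "cost (grp a H h t) \<le> H + 3*K + 2*h" using b1 b2 b3 assms(2-) by (simp add: grp_def) linarith
qed

lemma build_bounds:
  assumes "\<And>i. i \<in> {1..3*k+3} \<Longrightarrow> 0 < b i \<and> 2 * b i < K \<and> a i = b i + W"
    and "H = 3*W + K + h" and "W \<ge> 0" and "h \<ge> 0" and "K \<ge> 0"
  shows "\<bar>aval (build a H h k)\<bar> \<le> int (k+1) * K \<and>
         cost (build a H h k) \<le> int (k+1) * (H + 3*K + 2*h) + int (k+1) * int (k+1) * K"
  using assms(1)
proof (induction k)
  case 0
  have "\<bar>aval (grp a H h 0)\<bar> \<le> K \<and> cost (grp a H h 0) \<le> H + 3*K + 2*h"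
  proof (rule conjI[OF grp_bounds(1) grp_bounds(2)])
    fix i :: nat assume "i \<in> {3*0+1, 3*0+2, 3*0+3}"
    then have "i \<in> {1..3*0+3}" by auto
    then show "0 < b i \<and> 2 * b i < K \<and> a i = b i + W" using 0 by blast
  next
    fix i :: nat assume "i \<in> {3*0+1, 3*0+2, 3*0+3}"
    then have "i \<in> {1..3*0+3}" by auto
    then show "0 < b i \<and> 2 * b i < K \<and> a i = b i + W" using 0 by blast
  qed (use assms(2-) in auto)
  then show ?case using assms(5) by simp
next
  case (Suc k)
  have IH: "\<bar>aval (build a H h k)\<bar> \<le> int (k+1) * K \<and>
         cost (build a H h k) \<le> int (k+1) * (H + 3*K + 2*h) + int (k+1) * int (k+1) * K"
    using Suc by auto
  have g: "\<bar>aval (grp a H h (Suc k))\<bar> \<le> K \<and> cost (grp a H h (Suc k)) \<le> H + 3*K + 2*h"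
  proof (rule conjI[OF grp_bounds(1) grp_bounds(2)])
    fix i :: nat assume "i \<in> {3*Suc k+1, 3*Suc k+2, 3*Suc k+3}"
    then have "i \<in> {1..3*Suc k+3}" by auto
    then show "0 < b i \<and> 2 * b i < K \<and> a i = b i + W" using Suc.prems by blast
  next
    fix i :: nat assume "i \<in> {3*Suc k+1, 3*Suc k+2, 3*Suc k+3}"
    then have "i \<in> {1..3*Suc k+3}" by auto
    then show "0 < b i \<and> 2 * b i < K \<and> a i = b i + W" using Suc.prems by blast
  qed (use assms(2-) in auto)
  have e1: "\<bar>aval (build a H h (Suc k))\<bar> \<le> int (k+2) * K" using IH g by (simp add: algebra_simps) linarith
  have "cost (build a H h (Suc k)) \<le> int (k+2) * K + (int (k+1) * (H + 3*K + 2*h) + int (k+1) * int (k+1) * K) + (H + 3*K + 2*h)"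
    using IH g e1 by simp
  also have "\<dots> \<le> int (k+2) * (H + 3*K + 2*h) + int (k+2) * int (k+2) * K"
    using assms(5) by (simp add: algebra_simps)
  finally show ?case using e1 by simp
qed



lemma PP_size: "PP c t = int (size (filter_mset (\<lambda>x. c x = 1) (leaves t)))"
  by (induction t) auto

lemma NN_sum: "NN c t = sum_mset (image_mset c (leaves t))"
  by (induction t) auto

lemma filter_replicate_mset': "filter_mset P (replicate_mset n x) = (if P x then replicate_mset n x else {#})"
  by (induction n) auto

lemma fin_arith: "(A::int) \<le> 3*C \<Longrightarrow> C \<le> U \<Longrightarrow> 3*U = 3*x + 9*y + 6*p + 3*Q \<Longrightarrow>
  A = 3*x + H - 75*q + 15*p \<Longrightarrow> p \<le> 4*Q \<Longrightarrow> q \<le> 4*Q \<Longrightarrow> y \<le> Q \<Longrightarrow>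
  H = 7500*Q + k + h \<Longrightarrow> 1 \<le> Q \<Longrightarrow> 0 < h \<Longrightarrow> 0 \<le> p \<Longrightarrow> 0 \<le> k \<Longrightarrow> False"
  by linarith

theorem lemma2p8:
  fixes m K :: nat and b :: "nat \<Rightarrow> int"
    and W L h H :: int and \<epsilon> :: real and a :: "nat \<Rightarrow> int" and \<beta> :: "nat \<Rightarrow> real"
    and X :: "int multiset" and Tmin z :: atree
  assumes "m > 0" and "K > 0"
    and "\<And>i. i \<in> {1..3*m} \<Longrightarrow> b i > 0 \<and> real K / 4 < b i \<and> b i < real K / 2"
    and "(\<Sum>i=1..3*m. b i) = int m * int K"
    and "W = 100 * (5 * int m)^2 * int K"
    and "\<And>i. a i = b i + W"
    and "L = 3 * W + int K"
    and "\<epsilon> = 1 / (400 * (5 * real m)^2)"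
    and "h = \<lfloor>4 * \<epsilon> * real_of_int L\<rfloor>"
    and "H = L + h"
    and "\<beta> 0 = real_of_int h / real_of_int H"
    and "\<And>i. i \<in> {1..3*m} \<Longrightarrow> \<beta> i = real_of_int (a i) / real_of_int H - 1/3"
    and "X = mset (map a [1..<3*m+1]) + replicate_mset m (-H) + replicate_mset m h"
    and "min_cost_tree X Tmin"
    and "z \<in> nodes Tmin"
    and "\<exists>l. is_lambda (5*m) (3*m) \<beta> l \<and> real_of_int (aval z) = (1/3 + l) * real_of_int H"
  shows "is_leaf z"
proof (rule ccontr)
  assume nl: "\<not> is_leaf z"
  define Q where "Q = int m * int m * int K"
  have m1: "int m \<ge> 1" using assms(1) by simp
  have K1: "int K \<ge> 1" using assms(2) by simp
  have Qm: "int m * int K \<le> Q" unfolding Q_def using m1 K1 by simp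
  have Km: "int K \<le> int m * int K" using m1 K1 by simp
  have Wq: "W = 2500 * Q" unfolding Q_def assms(5) by (simp add: power2_eq_square algebra_simps)
  have Lq: "L = 7500 * Q + int K" using Wq assms(7) by simp
  have Qpos: "Q \<ge> 1" using Qm Km K1 by linarith
  define P where "P = real m * real m"
  have P1: "P \<ge> 1"
  proof -
    have "m * m \<ge> 1" using assms(1) by (cases m) auto
    then have "real (m * m) \<ge> 1" by linarith
    then show ?thesis by (simp add: P_def)
  qed
  have epsL: "4 * \<epsilon> * real_of_int L = 3 * real K + real K / (2500 * P)"
    unfolding assms(8) Lq Q_def P_def using assms(1) by (simp add: power2_eq_square field_simps)
  have fr0: "real K / (2500 * P) \<ge> 0" using P1 by simp
  have fr1: "real K / (2500 * P) \<le> real K"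
  proof -
    have "real K * 1 \<le> real K * (2500 * P)" by (rule mult_left_mono) (use P1 in auto)
    then show ?thesis using P1 by (simp add: divide_le_eq)
  qed
  have h3: "h \<ge> 3 * int K"
  proof -
    have "real_of_int (3 * int K) \<le> 4 * \<epsilon> * real_of_int L" using epsL fr0 by simp
    then show ?thesis unfolding assms(9) by (meson le_floor_iff)
  qed
  have h4: "h \<le> 4 * int K"
  proof -
    have "4 * \<epsilon> * real_of_int L \<le> real_of_int (4 * int K)" using epsL fr1 by simp
    then have "4 * \<epsilon> * real_of_int L < real_of_int (4 * int K) + 1" by simp
    then show ?thesis unfolding assms(9) by (simp add: floor_le_iff)
  qed
  have HH: "H = 7500 * Q + int K + h" using assms(10) Lq by simp
  have HW: "H = 3 * W + int K + h" using assms(10) assms(7) by simp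
  have bb: "0 < b i \<and> int K < 4 * b i \<and> 2 * b i < int K" if "i \<in> {1..3*m}" for i
  proof -
    have r: "b i > 0 \<and> real K / 4 < b i \<and> b i < real K / 2" using assms(3) that by blast
    then have "real_of_int (int K) < real_of_int (4 * b i)" "real_of_int (2 * b i) < real_of_int (int K)" by auto
    then show ?thesis using r by linarith
  qed
  have QK: "int K \<le> Q" using Qm Km by linarith
  define c where "c = (\<lambda>x::int. if x = -H then -3 else if x = h then (0::int) else 1)"
  have Hpos: "H > 0" using HH Qpos h3 by linarith
  have hpos: "h > 0" using h3 K1 by linarith
  have ca: "c (a i) = 1" if "i \<in> {1..3*m}" for i
  proof -
    have "a i > 4 * int K" using bb[OF that] assms(6)[of i] Wq QK by linarith
    then have "a i \<noteq> -H" "a i \<noteq> h" using Hpos h4 by linarith+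
    then show ?thesis unfolding c_def by simp
  qed
  have cH: "c (-H) = -3" unfolding c_def by simp
  have ch: "c h = 0" unfolding c_def using Hpos hpos by auto
  have LT: "leaves Tmin = X" using assms(14) unfolding min_cost_tree_def addition_tree_over_def by simp
  have setX: "(\<exists>i\<in>{1..3*m}. x = a i) \<or> x = -H \<or> x = h" if "x \<in># X" for x
    using that unfolding assms(13) by (auto split: if_splits)
  have leafprop: "c x \<in> {1,0,-3} \<and> \<bar>3*x - c x * H\<bar> \<le> 3*h" if xX: "x \<in># X" for x
  proof -
    consider (A) i where "i\<in>{1..3*m}" "x = a i" | (B) "x = -H" | (C) "x = h" using setX[OF xX] by blast
    then show ?thesis
    proof cases
      case A
      have "\<bar>3*x - H\<bar> \<le> 3*h" using bb[OF A(1)] assms(6)[of i] A(2) HW h3 by linarith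
      then show ?thesis using ca[OF A(1)] A(2) by simp
    next
      case B then show ?thesis using cH hpos by simp
    next
      case C then show ?thesis using ch hpos by simp
    qed
  qed
  have sizeX: "size X = 5 * m" unfolding assms(13) by simp
  have mapc: "map (c \<circ> a) [1..<3*m+1] = map (\<lambda>_. 1) [1..<3*m+1]"
    by (rule map_cong) (auto intro: ca)
  have PPT: "PP c Tmin = 3 * int m"
  proof -
    have f: "filter (\<lambda>x. c x = 1) (map a [1..<3*m+1]) = map a [1..<3*m+1]"
      using ca by (auto simp: filter_id_conv)
    have f1: "filter_mset (\<lambda>x. c x = 1) (mset (map a [1..<3*m+1])) = mset (map a [1..<3*m+1])"
      by (simp only: mset_filter[symmetric] f)
    have f2: "filter_mset (\<lambda>x. c x = 1) (replicate_mset m (-H)) = {#}" using cH by (simp add: filter_replicate_mset')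
    have f3: "filter_mset (\<lambda>x. c x = 1) (replicate_mset m h) = {#}" using ch by (simp add: filter_replicate_mset')
    have "filter_mset (\<lambda>x. c x = 1) X = mset (map a [1..<3*m+1])"
      unfolding assms(13) by (simp only: filter_union_mset f1 f2 f3) simp
    then show ?thesis unfolding PP_size LT by simp
  qed
  have NNT: "NN c Tmin = 0"
  proof -
    have i1: "image_mset c (mset (map a [1..<3*m+1])) = mset (map (\<lambda>_. (1::int)) [1..<3*m+1])"
      by (simp only: mset_map[symmetric] map_map mapc)
    have "sum_mset (image_mset c X) = sum_list (map (\<lambda>_. (1::int)) [1..<3*m+1]) + of_nat m * (-3) + of_nat m * 0"
      unfolding assms(13) by (simp only: image_mset_union image_replicate_mset i1 sum_mset.union sum_mset_sum_list sum_mset_replicate_mset cH ch)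
    also have "sum_list (map (\<lambda>_. (1::int)) [1..<3*m+1]) = 3 * int m"
      by (simp add: sum_list_triv)
    finally show ?thesis unfolding NN_sum LT by simp
  qed
  have leafT: "\<forall>x\<in>#leaves Tmin. \<bar>3*x - c x * H\<bar> \<le> 3*h" using leafprop LT by auto
  have leafT': "\<forall>x\<in>#leaves Tmin. c x \<in> {1,0,-3}" using leafprop LT by auto
  have zsub: "leaves z \<subseteq># leaves Tmin" by (rule leaves_sub[OF assms(15)])
  have leafz: "\<forall>x\<in>#leaves z. \<bar>3*x - c x * H\<bar> \<le> 3*h" using leafT zsub by (meson mset_subset_eqD)
  have sz: "size (leaves z) \<le> 5 * m" using size_mset_mono[OF zsub] LT sizeX by simp
  have zb: "\<bar>3 * aval z - NN c z * H\<bar> \<le> 3*h * int (5*m)"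
  proof -
    have "\<bar>3 * aval z - NN c z * H\<bar> \<le> 3*h * int (size (leaves z))" by (rule aval_bound[OF leafz])
    also have "\<dots> \<le> 3*h * int (5*m)" using sz hpos by (intro mult_left_mono) auto
    finally show ?thesis .
  qed
  obtain l cs where cs: "length cs \<le> 5*m" "\<forall>c\<in>set cs. snd c \<le> 3*m"
     "l = (\<Sum>c\<leftarrow>cs. (if fst c then 1 else -1) * \<beta> (snd c))"
     and lz: "real_of_int (aval z) = (1/3 + l) * real_of_int H"
    using assms(16) unfolding is_lambda_def by blast
  have betab: "\<bar>\<beta> j\<bar> \<le> real_of_int h / real_of_int H" if "j \<le> 3*m" for j
  proof (cases "j = 0")
    case True then show ?thesis using assms(11) hpos Hpos by simp
  next
    case False
    then have j: "j \<in> {1..3*m}" using that by simp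
    have jm: "a j \<in> set (map a [1..<3*m+1])" using j by (simp only: set_map set_upt) (intro imageI, simp)
    then have "a j \<in># X" unfolding assms(13) by (simp only: union_iff in_multiset_in_set) blast
    then have ib: "\<bar>3 * a j - H\<bar> \<le> 3*h" using leafprop ca[OF j] by fastforce
    have "\<beta> j = real_of_int (3 * a j - H) / (3 * real_of_int H)" using assms(12)[OF j] Hpos
      by (simp add: field_simps)
    then have "\<bar>\<beta> j\<bar> = \<bar>real_of_int (3 * a j - H)\<bar> / (3 * real_of_int H)" using Hpos by simp
    also have "\<dots> \<le> real_of_int (3*h) / (3 * real_of_int H)" using ib Hpos
      by (intro divide_right_mono) (simp_all, linarith?)
    finally show ?thesis using Hpos by simp
  qed
  have lb: "\<bar>l\<bar> \<le> real (5*m) * (real_of_int h / real_of_int H)"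
  proof -
    have "\<bar>l\<bar> \<le> real (length cs) * (real_of_int h / real_of_int H)"
      unfolding cs(3) by (rule abs_sum_list_le) (use cs(2) betab in \<open>auto simp: abs_mult\<close>)
    also have "\<dots> \<le> real (5*m) * (real_of_int h / real_of_int H)"
      using cs(1) hpos Hpos by (intro mult_right_mono) auto
    finally show ?thesis .
  qed
  have lH: "\<bar>3 * l * real_of_int H\<bar> \<le> 15 * real m * real_of_int h"
  proof -
    have "\<bar>3 * l * real_of_int H\<bar> = 3 * \<bar>l\<bar> * real_of_int H" using Hpos by (simp add: abs_mult)
    also have "\<dots> \<le> 3 * (real (5*m) * (real_of_int h / real_of_int H)) * real_of_int H"
      using lb Hpos by (intro mult_right_mono) auto
    also have "\<dots> = 15 * real m * real_of_int h" using Hpos by simp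
    finally show ?thesis .
  qed
  have e0: "int m * h \<le> 4 * (int m * int K)"
  proof -
    have "int m * h \<le> int m * (4 * int K)" by (rule mult_left_mono) (use h4 in auto)
    then show ?thesis by simp
  qed
  have e1: "int m * h \<le> 4 * Q" using e0 Qm by linarith
  have e2: "int m * (int m * h) \<le> 4 * Q"
  proof -
    have "int m * (int m * h) \<le> int m * (4 * (int m * int K))" by (rule mult_left_mono) (use e0 in auto)
    then show ?thesis unfolding Q_def by simp
  qed
  define R where "R = 3 * aval z - NN c z * H"
  have eq: "real_of_int ((NN c z - 1) * H) = 3 * l * real_of_int H - real_of_int R"
    using lz unfolding R_def by (simp add: algebra_simps)
  have Rb: "\<bar>real_of_int R\<bar> \<le> real_of_int (3*h * int (5*m))"
    using zb unfolding R_def by (simp only: of_int_abs[symmetric] of_int_le_iff)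
  have "\<bar>real_of_int ((NN c z - 1) * H)\<bar> \<le> \<bar>3 * l * real_of_int H\<bar> + \<bar>real_of_int R\<bar>"
    unfolding eq by (rule abs_triangle_ineq4)
  also have "\<dots> \<le> real_of_int (30 * int m * h)" using lH Rb by (simp add: algebra_simps)
  finally have "real_of_int \<bar>(NN c z - 1) * H\<bar> \<le> real_of_int (30 * int m * h)" by simp
  then have ab1: "\<bar>NN c z - 1\<bar> * H \<le> 30 * (int m * h)" using Hpos by (simp only: of_int_le_iff abs_mult)
  have ab2: "\<bar>NN c z - 1\<bar> * H < H" using ab1 e1 HH Qpos hpos by linarith
  have Nz: "NN c z = 1"
  proof (rule ccontr)
    assume "NN c z \<noteq> 1"
    then have "\<bar>NN c z - 1\<bar> \<ge> 1" by linarith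
    then have "1 * H \<le> \<bar>NN c z - 1\<bar> * H" using Hpos by (intro mult_right_mono) auto
    then show False using ab2 by simp
  qed
  have h1: "has1 c Tmin" unfolding has1_def using assms(15) nl Nz by blast
  have DT: "DD c Tmin \<ge> 3 * int m + 1"
    using DD_lower[OF leafT'] PPT NNT h1 by (simp add: ee_def)
  have low: "3 * cost Tmin \<ge> H * DD c Tmin - 3*h * int (5*m) * (int (size (leaves Tmin)) - 1)"
    by (rule cost_lower[OF leafT]) (use LT sizeX Hpos hpos in auto)
  have low2: "3 * cost Tmin \<ge> H * (3 * int m + 1) - 3*h * int (5*m) * (5 * int m - 1)"
  proof -
    have "H * (3 * int m + 1) \<le> H * DD c Tmin" using DT Hpos by (intro mult_left_mono) auto
    then show ?thesis using low LT sizeX by simp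
  qed
  have LB: "leaves (build a H h (m-1)) = X"
    unfolding leaves_build assms(13) using assms(1) by (cases m) (auto simp: algebra_simps)
  have up1: "cost Tmin \<le> cost (build a H h (m-1))"
    using assms(14) LB unfolding min_cost_tree_def addition_tree_over_def by blast
  have bbd: "\<bar>aval (build a H h (m-1))\<bar> \<le> int (m-1+1) * int K \<and>
         cost (build a H h (m-1)) \<le> int (m-1+1) * (H + 3*int K + 2*h) + int (m-1+1) * int (m-1+1) * int K"
  proof (rule build_bounds[of "m-1" b K a W H h])
    fix i assume "i \<in> {1..3*(m-1)+3}"
    then have "i \<in> {1..3*m}" using assms(1) by (cases m) auto
    then show "0 < b i \<and> 2 * b i < int K \<and> a i = b i + W" using bb assms(6) by blast
  qed (use HW Wq Qpos hpos in auto)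
  then have up2: "cost Tmin \<le> int m * (H + 3*int K + 2*h) + Q"
    using up1 assms(1) unfolding Q_def by simp
  have s1: "3 * (int m * (H + 3*int K + 2*h) + Q) = 3*(int m*H) + 9*(int m*int K) + 6*(int m*h) + 3*Q"
    by (simp add: algebra_simps)
  have s2: "H * (3 * int m + 1) - 3*h * int (5*m) * (5 * int m - 1) = 3*(int m*H) + H - 75*(int m*(int m*h)) + 15*(int m*h)"
    by (simp add: algebra_simps)
  have mh0: "int m * h \<ge> 0" using hpos by simp
  show False by (rule fin_arith[OF low2 up2 s1 s2 e1 e2 Qm HH Qpos hpos mh0]) simp
qed
end
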